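(* Let $A$ be a unital simple projectionless $C^*$-algebra with a unique tracial state $\tau$, and let $\alpha\in\mathrm{Aut}(A)$. Suppose there exists a bounded sequence $(f_n)_{n\in\mathbb{N}}$ of positive elements of $A$ with $\|f_n\|\le1$ which is central (i.e. $\|[f_n,a]\|\to0$ for every $a\in A$) and satisfies $\|\alpha(f_n)f_n\|\to0$ and $\tau(1_A-(f_n+\alpha(f_n)))\to0$ as $n\to\infty$. Then $\alpha\notin\mathrm{WInn}(A)$.
   Context: Let $\pi_\tau$ denote the GNS representation of $A$ associated with $\tau$, and $\pi_\tau(A)''$ its weak closure. $\mathrm{WInn}(A)=\{\alpha\in\mathrm{Aut}(A): \text{there is a unitary } V\in\pi_\tau(A)'' \text{ with } \pi_\tau\circ\alpha=\mathrm{Ad}V\circ\pi_\tau\}$. (In the paper the hypothesis is phrased as: $(f_n)_n$ is a positive contraction in $A_\infty=A^\infty\cap A'$, where $A^\infty=\ell^\infty(\mathbb{N},A)/c_0(A)$, and $(\alpha(f_n))_n\cdot(f_n)_n=0$ in $A^\infty$.) *)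

theory Defs
  imports "HOL-Analysis.Analysis"
begin

text \<open>Unital C*-algebras are modelled on a type 'a of class real_normed_algebra_1 and banach
  (so the norm, ring structure, unit and completeness come from the type), together with a
  complex scalar multiplication scC and an involution st.\<close>

definition unital_cstar_algebra ::
  "(complex \<Rightarrow> 'a::{real_normed_algebra_1,banach} \<Rightarrow> 'a) \<Rightarrow> ('a \<Rightarrow> 'a) \<Rightarrow> bool" where
  "unital_cstar_algebra scC st \<longleftrightarrow>
     (\<forall>a b x. scC (a + b) x = scC a x + scC b x) \<and>
     (\<forall>a x y. scC a (x + y) = scC a x + scC a y) \<and>
     (\<forall>a b x. scC (a * b) x = scC a (scC b x)) \<and>
     (\<forall>x. scC 1 x = x) \<and>
     (\<forall>r x. scC (complex_of_real r) x = scaleR r x) \<and>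
     (\<forall>a x. norm (scC a x) = cmod a * norm x) \<and>
     (\<forall>a x y. scC a (x * y) = scC a x * y \<and> scC a (x * y) = x * scC a y) \<and>
     (\<forall>x y. st (x + y) = st x + st y) \<and>
     (\<forall>a x. st (scC a x) = scC (cnj a) (st x)) \<and>
     (\<forall>x y. st (x * y) = st y * st x) \<and>
     (\<forall>x. st (st x) = x) \<and>
     (\<forall>x. norm (st x * x) = norm x ^ 2)"

definition invertible_el :: "'a::ring_1 \<Rightarrow> bool" where
  "invertible_el x \<longleftrightarrow> (\<exists>y. x * y = 1 \<and> y * x = 1)"

definition spectrum_el :: "(complex \<Rightarrow> 'a::ring_1 \<Rightarrow> 'a) \<Rightarrow> 'a \<Rightarrow> complex set" where
  "spectrum_el scC x = {c. \<not> invertible_el (x - scC c 1)}"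

definition positive_el :: "(complex \<Rightarrow> 'a::ring_1 \<Rightarrow> 'a) \<Rightarrow> ('a \<Rightarrow> 'a) \<Rightarrow> 'a \<Rightarrow> bool" where
  "positive_el scC st x \<longleftrightarrow> st x = x \<and>
     (\<forall>c \<in> spectrum_el scC x. c \<in> \<real> \<and> Re c \<ge> 0)"

definition closed_ideal :: "(complex \<Rightarrow> 'a::{real_normed_algebra_1} \<Rightarrow> 'a) \<Rightarrow> 'a set \<Rightarrow> bool" where
  "closed_ideal scC I \<longleftrightarrow> closed I \<and> 0 \<in> I \<and>
     (\<forall>x\<in>I. \<forall>y\<in>I. x + y \<in> I) \<and> (\<forall>c. \<forall>x\<in>I. scC c x \<in> I) \<and>
     (\<forall>x\<in>I. \<forall>a. a * x \<in> I \<and> x * a \<in> I)"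

definition simple_algebra :: "(complex \<Rightarrow> 'a::{real_normed_algebra_1} \<Rightarrow> 'a) \<Rightarrow> bool" where
  "simple_algebra scC \<longleftrightarrow> (\<forall>I. closed_ideal scC I \<longrightarrow> I = {0} \<or> I = UNIV)"

definition projectionless :: "('a::ring_1 \<Rightarrow> 'a) \<Rightarrow> bool" where
  "projectionless st \<longleftrightarrow> (\<forall>p. st p = p \<and> p * p = p \<longrightarrow> p = 0 \<or> p = 1)"

definition tracial_state ::
  "(complex \<Rightarrow> 'a::ring_1 \<Rightarrow> 'a) \<Rightarrow> ('a \<Rightarrow> 'a) \<Rightarrow> ('a \<Rightarrow> complex) \<Rightarrow> bool" where
  "tracial_state scC st \<phi> \<longleftrightarrow>
     (\<forall>x y. \<phi> (x + y) = \<phi> x + \<phi> y) \<and> (\<forall>c x. \<phi> (scC c x) = c * \<phi> x) \<and>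
     (\<forall>x. positive_el scC st x \<longrightarrow> \<phi> x \<in> \<real> \<and> Re (\<phi> x) \<ge> 0) \<and>
     \<phi> 1 = 1 \<and> (\<forall>x y. \<phi> (x * y) = \<phi> (y * x))"

definition unique_tracial_state ::
  "(complex \<Rightarrow> 'a::ring_1 \<Rightarrow> 'a) \<Rightarrow> ('a \<Rightarrow> 'a) \<Rightarrow> ('a \<Rightarrow> complex) \<Rightarrow> bool" where
  "unique_tracial_state scC st \<tau> \<longleftrightarrow> tracial_state scC st \<tau> \<and>
     (\<forall>\<sigma>. tracial_state scC st \<sigma> \<longrightarrow> \<sigma> = \<tau>)"

definition star_automorphism ::
  "(complex \<Rightarrow> 'a::ring_1 \<Rightarrow> 'a) \<Rightarrow> ('a \<Rightarrow> 'a) \<Rightarrow> ('a \<Rightarrow> 'a) \<Rightarrow> bool" where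
  "star_automorphism scC st \<alpha> \<longleftrightarrow> bij \<alpha> \<and>
     (\<forall>x y. \<alpha> (x + y) = \<alpha> x + \<alpha> y) \<and> (\<forall>c x. \<alpha> (scC c x) = scC c (\<alpha> x)) \<and>
     (\<forall>x y. \<alpha> (x * y) = \<alpha> x * \<alpha> y) \<and> (\<forall>x. \<alpha> (st x) = st (\<alpha> x))"

text \<open>Complex Hilbert spaces on a Banach type 'h with complex scalar multiplication hsc and
  inner product hin (linear in the second, conjugate-linear in the first argument),
  whose norm is the type's norm.\<close>
definition complex_hilbert ::
  "(complex \<Rightarrow> 'h::banach \<Rightarrow> 'h) \<Rightarrow> ('h \<Rightarrow> 'h \<Rightarrow> complex) \<Rightarrow> bool" where
  "complex_hilbert hsc hin \<longleftrightarrow>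
     (\<forall>a b x. hsc (a + b) x = hsc a x + hsc b x) \<and>
     (\<forall>a x y. hsc a (x + y) = hsc a x + hsc a y) \<and>
     (\<forall>a b x. hsc (a * b) x = hsc a (hsc b x)) \<and>
     (\<forall>x. hsc 1 x = x) \<and>
     (\<forall>r x. hsc (complex_of_real r) x = scaleR r x) \<and>
     (\<forall>x y z. hin x (y + z) = hin x y + hin x z) \<and>
     (\<forall>c x y. hin x (hsc c y) = c * hin x y) \<and>
     (\<forall>x y. hin y x = cnj (hin x y)) \<and>
     (\<forall>x. hin x x \<in> \<real> \<and> Re (hin x x) \<ge> 0 \<and> norm x = sqrt (Re (hin x x)))"

definition bounded_clinear_op :: "(complex \<Rightarrow> 'h::real_normed_vector \<Rightarrow> 'h) \<Rightarrow> ('h \<Rightarrow> 'h) \<Rightarrow> bool" where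
  "bounded_clinear_op hsc T \<longleftrightarrow> (\<forall>x y. T (x + y) = T x + T y) \<and>
     (\<forall>c x. T (hsc c x) = hsc c (T x)) \<and> (\<exists>K. \<forall>x. norm (T x) \<le> K * norm x)"

definition commutant :: "(complex \<Rightarrow> 'h::real_normed_vector \<Rightarrow> 'h) \<Rightarrow> ('h \<Rightarrow> 'h) set \<Rightarrow> ('h \<Rightarrow> 'h) set" where
  "commutant hsc S = {T. bounded_clinear_op hsc T \<and> (\<forall>s\<in>S. T \<circ> s = s \<circ> T)}"

definition unitary_op ::
  "(complex \<Rightarrow> 'h::real_normed_vector \<Rightarrow> 'h) \<Rightarrow> ('h \<Rightarrow> 'h \<Rightarrow> complex) \<Rightarrow> ('h \<Rightarrow> 'h) \<Rightarrow> bool" where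
  "unitary_op hsc hin V \<longleftrightarrow> bounded_clinear_op hsc V \<and> surj V \<and> (\<forall>x y. hin (V x) (V y) = hin x y)"

definition star_representation ::
  "(complex \<Rightarrow> 'a::ring_1 \<Rightarrow> 'a) \<Rightarrow> ('a \<Rightarrow> 'a) \<Rightarrow> (complex \<Rightarrow> 'h::banach \<Rightarrow> 'h) \<Rightarrow>
   ('h \<Rightarrow> 'h \<Rightarrow> complex) \<Rightarrow> ('a \<Rightarrow> 'h \<Rightarrow> 'h) \<Rightarrow> bool" where
  "star_representation scC st hsc hin \<pi> \<longleftrightarrow>
     (\<forall>a. bounded_clinear_op hsc (\<pi> a)) \<and>
     (\<forall>x y. \<pi> (x + y) = (\<lambda>v. \<pi> x v + \<pi> y v)) \<and>
     (\<forall>c x. \<pi> (scC c x) = (\<lambda>v. hsc c (\<pi> x v))) \<and>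
     (\<forall>x y. \<pi> (x * y) = \<pi> x \<circ> \<pi> y) \<and> \<pi> 1 = id \<and>
     (\<forall>x u v. hin (\<pi> (st x) u) v = hin u (\<pi> x v))"

text \<open>GNS representation of A associated with the state \<tau>: a cyclic *-representation
  (\<pi>, \<xi>) with \<tau>(a) = <\<xi>, \<pi>(a) \<xi>>. (Unique up to unitary equivalence.)\<close>
definition gns_representation ::
  "(complex \<Rightarrow> 'a::ring_1 \<Rightarrow> 'a) \<Rightarrow> ('a \<Rightarrow> 'a) \<Rightarrow> ('a \<Rightarrow> complex) \<Rightarrow>
   (complex \<Rightarrow> 'h::banach \<Rightarrow> 'h) \<Rightarrow> ('h \<Rightarrow> 'h \<Rightarrow> complex) \<Rightarrow> ('a \<Rightarrow> 'h \<Rightarrow> 'h) \<Rightarrow> 'h \<Rightarrow> bool" where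
  "gns_representation scC st \<tau> hsc hin \<pi> \<xi> \<longleftrightarrow>
     complex_hilbert hsc hin \<and> star_representation scC st hsc hin \<pi> \<and>
     closure (range (\<lambda>a. \<pi> a \<xi>)) = UNIV \<and> (\<forall>a. \<tau> a = hin \<xi> (\<pi> a \<xi>))"

definition WInn ::
  "(complex \<Rightarrow> 'a::ring_1 \<Rightarrow> 'a) \<Rightarrow> ('a \<Rightarrow> 'a) \<Rightarrow>
   (complex \<Rightarrow> 'h::real_normed_vector \<Rightarrow> 'h) \<Rightarrow> ('h \<Rightarrow> 'h \<Rightarrow> complex) \<Rightarrow> ('a \<Rightarrow> 'h \<Rightarrow> 'h) \<Rightarrow>
   ('a \<Rightarrow> 'a) set" where
  "WInn scC st hsc hin \<pi> = {\<alpha>. star_automorphism scC st \<alpha> \<and>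
     (\<exists>V. unitary_op hsc hin V \<and> V \<in> commutant hsc (commutant hsc (range \<pi>)) \<and>
          (\<forall>a. \<pi> (\<alpha> a) = V \<circ> \<pi> a \<circ> inv V))}"

end

theory Submission
  imports Defs "HOL-Computational_Algebra.Formal_Power_Series"
begin


context
  fixes scC :: "complex \<Rightarrow> 'a::{real_normed_algebra_1,banach} \<Rightarrow> 'a" and st :: "'a \<Rightarrow> 'a"
  assumes C: "unital_cstar_algebra scC st"
begin

lemma st_add: "st (x + y) = st x + st y" using C unfolding unital_cstar_algebra_def by blast
lemma st_mult: "st (x * y) = st y * st x" using C unfolding unital_cstar_algebra_def by blast
lemma st_st: "st (st x) = x" using C unfolding unital_cstar_algebra_def by blast
lemma cstar_id: "norm (st x * x) = norm x ^ 2" using C unfolding unital_cstar_algebra_def by blast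
lemma scC_real: "scC (complex_of_real r) x = scaleR r x" using C unfolding unital_cstar_algebra_def by blast
lemma st_scC: "st (scC a x) = scC (cnj a) (st x)" using C unfolding unital_cstar_algebra_def by blast

lemma st_scaleR: "st (scaleR r x) = scaleR r (st x)"
  by (metis scC_real st_scC complex_cnj_complex_of_real)

lemma st_zero: "st 0 = 0" using st_add[of 0 0] by simp
lemma st_minus: "st (- x) = - st x"
  using st_add[of "-x" x] st_zero by (simp add: eq_neg_iff_add_eq_0)
lemma st_diff: "st (x - y) = st x - st y" by (simp only: diff_conv_add_uminus st_add st_minus)
lemma st_one: "st 1 = 1"
proof -
  have "st 1 = st 1 * st (st 1)" by (simp add: st_st)
  also have "\<dots> = st (st 1 * 1)" by (simp only: st_mult)
  also have "\<dots> = 1" by (simp add: st_st)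
  finally show ?thesis .
qed
lemma st_power: "st (x ^ k) = st x ^ k"
  by (induction k) (simp_all add: st_one st_mult power_commutes)

lemma norm_st_le: "norm x \<le> norm (st x)"
proof (cases "x = 0")
  case False
  have "norm x ^ 2 \<le> norm (st x) * norm x" using cstar_id[of x] norm_mult_ineq[of "st x" x] by simp
  then show ?thesis using False by (simp add: power2_eq_square)
qed simp

lemma norm_st: "norm (st x) = norm x"
  using norm_st_le[of x] norm_st_le[of "st x"] st_st[of x] by simp

lemma norm_st_mult: "norm (st x * x) = norm x ^ 2" by (rule cstar_id)

lemma bl_st: "bounded_linear st"
  by (rule bounded_linear_intro[of _ 1]) (simp_all add: st_add st_scaleR norm_st)

end

definition sqc :: "nat \<Rightarrow> real" where "sqc k = (-1)^k * ((1/2::real) gchoose k)"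

lemma abs_half_gchoose: "\<bar>(1/2::real) gchoose k\<bar> \<le> 1"
proof (induction k)
  case (Suc k)
  have e: "(1/2::real) gchoose Suc k = ((1/2) gchoose k) * ((1/2 - of_nat k) / of_nat (Suc k))"
  proof -
    have "fact (Suc k) * ((1/2::real) gchoose Suc k) = (\<Prod>i = 0..<Suc k. 1/2 - of_nat i)"
      by (rule gbinomial_mult_fact)
    also have "\<dots> = (\<Prod>i = 0..<k. 1/2 - of_nat i) * (1/2 - of_nat k)"
      by (rule prod.atLeast0_lessThan_Suc)
    also have "\<dots> = fact k * ((1/2::real) gchoose k) * (1/2 - of_nat k)"
      by (simp only: gbinomial_mult_fact)
    finally have h: "real (Suc k) * fact k * ((1/2::real) gchoose Suc k) = fact k * ((1/2) gchoose k) * (1/2 - of_nat k)"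
      by (simp only: fact_Suc of_nat_mult)
    have "fact k > (0::real)" by simp
    then have "real (Suc k) * ((1/2::real) gchoose Suc k) = ((1/2) gchoose k) * (1/2 - of_nat k)"
      using h by (metis (no_types, lifting) mult.assoc mult.left_commute mult_left_cancel less_irrefl)
    then show ?thesis by (simp add: divide_simps algebra_simps)
  qed
  have "\<bar>(1/2 - real k) / real (Suc k)\<bar> \<le> 1" by (auto simp: divide_simps abs_le_iff)
  then show ?case unfolding e abs_mult using Suc
    by (metis abs_ge_zero mult_le_one)
qed simp

lemma sqc_conv: "(\<Sum>i\<le>n. sqc i * sqc (n - i)) = (if n = 0 then 1 else if n = 1 then -1 else 0)"
proof -
  have "(\<Sum>i\<le>n. sqc i * sqc (n - i)) = (-1)^n * (\<Sum>i\<in>{0..n}. ((1/2::real) gchoose i) * ((1/2) gchoose (n - i)))"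
    unfolding sqc_def sum_distrib_left atMost_atLeast0
    by (rule sum.cong) (auto simp: power_add[symmetric])
  also have "\<dots> = (-1)^n * ((1::real) gchoose n)" by (simp add: gbinomial_Vandermonde)
  also have "((1::real) gchoose n) = of_nat (1 choose n)" by (metis binomial_gbinomial of_nat_1)
  finally show ?thesis by (cases n) (auto simp: binomial_eq_0)
qed


lemma abs_sqc: "\<bar>sqc k\<bar> \<le> 1"
  using abs_half_gchoose[of k] by (simp add: sqc_def abs_mult)

lemma cstar_sqrt:
  fixes scC :: "complex \<Rightarrow> 'a::{real_normed_algebra_1,banach} \<Rightarrow> 'a" and st :: "'a \<Rightarrow> 'a"
  assumes C: "unital_cstar_algebra scC st" and hs: "st h = h" and hn: "norm h < 1"
  shows "\<exists>s. st s = s \<and> s * s = 1 - h"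
proof -
  define a where "a k = scaleR (sqc k) (h ^ k)" for k
  have nb: "norm (a k) \<le> norm h ^ k" for k
  proof -
    have "norm (a k) = \<bar>sqc k\<bar> * norm (h ^ k)" by (simp add: a_def)
    also have "\<dots> \<le> 1 * norm h ^ k"
      by (rule mult_mono) (auto simp: abs_sqc norm_power_ineq)
    finally show ?thesis by simp
  qed
  have sg: "summable (\<lambda>k. norm h ^ k)" using hn by (intro summable_geometric) simp
  have sa: "summable (\<lambda>k. norm (a k))"
    by (rule summable_comparison_test[OF _ sg]) (use nb in auto)
  define S where "S = suminf a"
  have sumsS: "a sums S" unfolding S_def using summable_norm_cancel[OF sa] by (simp add: summable_sums)
  have cp: "(\<lambda>k. \<Sum>i\<le>k. a i * a (k - i)) sums (S * S)"
    using Cauchy_product_sums[OF sa sa] unfolding S_def .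
  have eq: "(\<Sum>i\<le>k. a i * a (k - i)) = (if k = 0 then 1 else if k = 1 then - h else 0)" for k
  proof -
    have "(\<Sum>i\<le>k. a i * a (k - i)) = (\<Sum>i\<le>k. scaleR (sqc i * sqc (k - i)) (h ^ k))"
      by (rule sum.cong) (auto simp: a_def power_add[symmetric])
    also have "\<dots> = scaleR (\<Sum>i\<le>k. sqc i * sqc (k - i)) (h ^ k)"
      by (simp add: scaleR_sum_left)
    finally show ?thesis by (simp add: sqc_conv)
  qed
  define g :: "nat \<Rightarrow> 'a" where "g k = (if k = 0 then 1 else if k = 1 then - h else (0::'a))" for k
  have "g sums (\<Sum>k\<in>{0,1}. g k)" by (rule sums_finite) (auto simp: g_def)
  then have "g sums (1 - h)" by (simp add: g_def)
  moreover have "g = (\<lambda>k. \<Sum>i\<le>k. a i * a (k - i))" by (rule ext) (simp add: g_def eq)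
  ultimately have "(\<lambda>k. \<Sum>i\<le>k. a i * a (k - i)) sums (1 - h)" by simp
  then have sq: "S * S = 1 - h" using cp sums_unique2 by blast
  have "(\<lambda>k. st (a k)) sums st S" using bounded_linear.sums[OF bl_st[OF C] sumsS] .
  moreover have "st (a k) = a k" for k
    by (simp add: a_def st_scaleR[OF C] st_power[OF C] hs)
  ultimately have "st S = S" using sumsS sums_unique2 by auto
  then show ?thesis using sq by blast
qed



context
  fixes hsc :: "complex \<Rightarrow> 'h::banach \<Rightarrow> 'h" and hin :: "'h \<Rightarrow> 'h \<Rightarrow> complex"
  assumes H: "complex_hilbert hsc hin"
begin

lemma hin_add2: "hin x (y + z) = hin x y + hin x z" using H unfolding complex_hilbert_def by blast
lemma hin_sc2: "hin x (hsc c y) = c * hin x y" using H unfolding complex_hilbert_def by blast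
lemma hin_sym: "hin y x = cnj (hin x y)" using H unfolding complex_hilbert_def by blast
lemma hsc_real: "hsc (complex_of_real r) x = scaleR r x" using H unfolding complex_hilbert_def by blast
lemma hsc_add2: "hsc a (x + y) = hsc a x + hsc a y" using H unfolding complex_hilbert_def by blast
lemma hsc_mult: "hsc (a * b) x = hsc a (hsc b x)" using H unfolding complex_hilbert_def by blast
lemma hin_self_prop: "hin x x \<in> \<real> \<and> Re (hin x x) \<ge> 0 \<and> norm x = sqrt (Re (hin x x))"
  using H unfolding complex_hilbert_def by blast

lemma hin_self: "hin x x = complex_of_real (norm x ^ 2)"
proof -
  have r: "hin x x \<in> \<real>" and p: "Re (hin x x) \<ge> 0" and n: "norm x = sqrt (Re (hin x x))"
    using hin_self_prop by auto
  have "norm x ^ 2 = Re (hin x x)" using n p by simp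
  then show ?thesis using r by (metis Reals_cases Re_complex_of_real)
qed

lemma norm_sq_hin: "norm x ^ 2 = Re (hin x x)" using hin_self by simp

lemma hin_add1: "hin (y + z) x = hin y x + hin z x"
  by (metis complex_cnj_add hin_add2 hin_sym)
lemma hin_sc1: "hin (hsc c y) x = cnj c * hin y x"
  by (metis complex_cnj_mult hin_sc2 hin_sym)
lemma hin_zero2: "hin x 0 = 0" by (metis add_cancel_right_right add_0 hin_add2)
lemma hin_zero1: "hin 0 x = 0" by (metis complex_cnj_zero hin_sym hin_zero2)
lemma hin_minus2: "hin x (- y) = - hin x y" by (metis add.right_inverse add_eq_0_iff hin_add2 hin_zero2)
lemma hin_minus1: "hin (- y) x = - hin y x" by (metis complex_cnj_minus hin_minus2 hin_sym)
lemma hin_diff2: "hin x (y - z) = hin x y - hin x z" by (simp only: diff_conv_add_uminus hin_add2 hin_minus2)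
lemma hin_diff1: "hin (y - z) x = hin y x - hin z x" by (simp only: diff_conv_add_uminus hin_add1 hin_minus1)

lemma norm_hsc: "norm (hsc c x) = cmod c * norm x"
proof -
  have "norm (hsc c x) ^ 2 = Re (cnj c * (c * hin x x))"
    by (simp only: norm_sq_hin hin_sc1 hin_sc2) (simp add: ac_simps)
  also have "cnj c * (c * hin x x) = (c * cnj c) * hin x x" by (simp add: ac_simps)
  also have "\<dots> = complex_of_real (cmod c ^ 2) * complex_of_real (norm x ^ 2)"
    by (simp only: complex_norm_square hin_self)
  also have "Re \<dots> = (cmod c * norm x) ^ 2" by (simp add: power_mult_distrib)
  finally show ?thesis by (simp add: power2_eq_iff_nonneg)
qed

lemma Re_hin_le: "Re (hin x y) \<le> norm x * norm y"
proof -
  have "norm (x + y) ^ 2 = Re (hin x x + hin x y + hin y x + hin y y)"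
    by (simp add: norm_sq_hin hin_add1 hin_add2 algebra_simps)
  also have "\<dots> = norm x ^ 2 + norm y ^ 2 + 2 * Re (hin x y)"
    by (subst hin_sym[of y x]) (simp add: norm_sq_hin)
  finally have e: "norm (x + y) ^ 2 = norm x ^ 2 + norm y ^ 2 + 2 * Re (hin x y)" .
  have "norm (x + y) ^ 2 \<le> (norm x + norm y) ^ 2"
    by (rule power_mono[OF norm_triangle_ineq]) simp
  then show ?thesis using e by (simp add: power2_sum)
qed

lemma CS: "cmod (hin x y) \<le> norm x * norm y"
proof (cases "hin x y = 0")
  case False
  define \<theta> where "\<theta> = cnj (hin x y) / cmod (hin x y)"
  have t1: "cmod \<theta> = 1" using False by (simp add: \<theta>_def norm_divide)
  have cz: "cnj (hin x y) * hin x y = complex_of_real (cmod (hin x y) ^ 2)"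
    by (metis complex_norm_square mult.commute of_real_power)
  have "hin x (hsc \<theta> y) = cnj (hin x y) * hin x y / complex_of_real (cmod (hin x y))"
    by (simp add: hin_sc2 \<theta>_def)
  also have "\<dots> = complex_of_real (cmod (hin x y))"
    using False unfolding cz by (simp add: power2_eq_square)
  finally have "hin x (hsc \<theta> y) = complex_of_real (cmod (hin x y))" .
  then have "cmod (hin x y) = Re (hin x (hsc \<theta> y))" by simp
  also have "\<dots> \<le> norm x * norm (hsc \<theta> y)" by (rule Re_hin_le)
  also have "\<dots> = norm x * norm y" by (simp add: norm_hsc t1)
  finally show ?thesis .
qed simp

end



lemma le_from_above:
  fixes a b c :: real
  assumes "\<And>t. t > a \<Longrightarrow> b \<le> t * c" "c \<ge> 0"
  shows "b \<le> a * c"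
proof (cases "c = 0")
  case True then show ?thesis using assms(1)[of "a+1"] by simp
next
  case False
  then have cp: "c > 0" using assms(2) by simp
  show ?thesis
  proof (rule field_le_epsilon)
    fix e :: real assume e: "e > 0"
    have "b \<le> (a + e / c) * c" using assms(1)[of "a + e / c"] e cp by simp
    then show "b \<le> a * c + e" using cp by (simp add: distrib_right)
  qed
qed

context
  fixes hsc :: "complex \<Rightarrow> 'h::banach \<Rightarrow> 'h" and hin :: "'h \<Rightarrow> 'h \<Rightarrow> complex"
  assumes H: "complex_hilbert hsc hin"
begin

context
  fixes T :: "'h \<Rightarrow> 'h"
  assumes T: "bounded_clinear_op hsc T"
begin
lemma T_add: "T (x + y) = T x + T y" using T unfolding bounded_clinear_op_def by blast
lemma T_sc: "T (hsc c x) = hsc c (T x)" using T unfolding bounded_clinear_op_def by blast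
lemma T_zero: "T 0 = 0" by (metis add_cancel_right_right add_0 T_add)
lemma T_minus: "T (- x) = - T x" by (metis add.right_inverse add_eq_0_iff T_add T_zero)
lemma T_diff: "T (x - y) = T x - T y" by (simp only: diff_conv_add_uminus T_add T_minus)
lemma T_scaleR: "T (scaleR r x) = scaleR r (T x)" by (metis T_sc hsc_real[OF H])
lemma T_bl: "bounded_linear T"
proof -
  obtain K where K: "\<And>x. norm (T x) \<le> K * norm x" using T unfolding bounded_clinear_op_def by blast
  show ?thesis by (rule bounded_linear_intro[of _ K]) (simp_all add: T_add T_scaleR K mult.commute)
qed
lemma T_cont: "continuous_on S T"
  using T_bl by (simp add: linear_continuous_on)
end

lemma hsc_bclo: "bounded_clinear_op hsc (hsc c)"
  unfolding bounded_clinear_op_def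
proof (intro conjI allI exI)
  show "hsc c (x + y) = hsc c x + hsc c y" for x y by (rule hsc_add2[OF H])
  show "hsc c (hsc d x) = hsc d (hsc c x)" for d x
    by (metis hsc_mult[OF H] mult.commute)
  show "norm (hsc c x) \<le> cmod c * norm x" for x by (simp add: norm_hsc[OF H])
qed

lemma hin_scaleR2: "hin x (scaleR r y) = complex_of_real r * hin x y"
  by (metis hsc_real[OF H] hin_sc2[OF H])

end



context
  fixes scC :: "complex \<Rightarrow> 'a::{real_normed_algebra_1,banach} \<Rightarrow> 'a" and st :: "'a \<Rightarrow> 'a"
    and hsc :: "complex \<Rightarrow> 'h::banach \<Rightarrow> 'h" and hin :: "'h \<Rightarrow> 'h \<Rightarrow> complex"
    and \<pi> :: "'a \<Rightarrow> 'h \<Rightarrow> 'h"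
  assumes C: "unital_cstar_algebra scC st" and H: "complex_hilbert hsc hin"
    and P: "star_representation scC st hsc hin \<pi>"
begin

lemma pi_bclo: "bounded_clinear_op hsc (\<pi> a)" using P unfolding star_representation_def by blast
lemma pi_add: "\<pi> (x + y) v = \<pi> x v + \<pi> y v" using P unfolding star_representation_def by metis
lemma pi_sc: "\<pi> (scC c x) v = hsc c (\<pi> x v)" using P unfolding star_representation_def by metis
lemma pi_mult: "\<pi> (x * y) v = \<pi> x (\<pi> y v)" using P unfolding star_representation_def by (metis comp_apply)
lemma pi_one: "\<pi> 1 v = v" using P unfolding star_representation_def by (metis id_apply)
lemma pi_adj: "hin (\<pi> (st x) u) v = hin u (\<pi> x v)" using P unfolding star_representation_def by blast
lemma pi_scaleR: "\<pi> (scaleR r x) v = scaleR r (\<pi> x v)"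
  by (metis pi_sc scC_real[OF C] hsc_real[OF H])
lemma pi_zero: "\<pi> 0 v = 0" by (metis add_cancel_right_right add_0 pi_add)
lemma pi_minus: "\<pi> (- x) v = - \<pi> x v" by (metis add.right_inverse add_eq_0_iff pi_add pi_zero)
lemma pi_diff: "\<pi> (x - y) v = \<pi> x v - \<pi> y v" by (simp only: diff_conv_add_uminus pi_add pi_minus)

lemma pi_hin_self: "hin (\<pi> x w) (\<pi> x w) = hin w (\<pi> (st x * x) w)"
proof -
  have "hin (\<pi> x w) (\<pi> x w) = hin (\<pi> (st (st x)) w) (\<pi> x w)" by (simp only: st_st[OF C])
  also have "\<dots> = hin w (\<pi> (st x) (\<pi> x w))" by (rule pi_adj)
  also have "\<dots> = hin w (\<pi> (st x * x) w)" by (simp only: pi_mult)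
  finally show ?thesis .
qed

lemma pi_norm_sq: "norm (\<pi> x w) ^ 2 = Re (hin w (\<pi> (st x * x) w))"
  by (simp only: norm_sq_hin[OF H] pi_hin_self)

lemma pi_norm: "norm (\<pi> x w) \<le> norm x * norm w"
proof (rule le_from_above)
  fix t assume t: "t > norm x"
  then have tp: "t > 0" using norm_ge_zero[of x] by linarith
  define h where "h = scaleR (1 / t^2) (st x * x)"
  have hs: "st h = h" unfolding h_def by (simp only: st_scaleR[OF C] st_mult[OF C] st_st[OF C])
  have "norm h = (1 / t^2) * norm x ^ 2" unfolding h_def norm_scaleR cstar_id[OF C] using tp by simp
  also have "\<dots> < 1"
  proof -
    have "norm x ^ 2 < t ^ 2" using t by (intro power_strict_mono) auto
    then show ?thesis using tp by (simp add: divide_simps)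
  qed
  finally have "\<exists>s. st s = s \<and> s * s = 1 - h" by (rule cstar_sqrt[OF C hs])
  then obtain s where s: "st s = s" "s * s = 1 - h" by blast
  have "norm (\<pi> s w) ^ 2 = Re (hin w (\<pi> (st s * s) w))" by (rule pi_norm_sq)
  also have "\<dots> = Re (hin w (\<pi> (1 - h) w))" by (simp only: s)
  also have "\<pi> (1 - h) w = w - scaleR (1 / t^2) (\<pi> (st x * x) w)"
    by (simp only: pi_diff pi_one h_def pi_scaleR)
  also have "hin w \<dots> = hin w w - complex_of_real (1 / t^2) * hin w (\<pi> (st x * x) w)"
    by (simp only: hin_diff2[OF H] hin_scaleR2[OF H])
  also have "Re \<dots> = Re (hin w w) - (1 / t^2) * Re (hin w (\<pi> (st x * x) w))"
    by simp
  also have "\<dots> = norm w ^ 2 - (1 / t^2) * norm (\<pi> x w) ^ 2"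
    by (simp only: norm_sq_hin[OF H] pi_hin_self)
  finally have "(1 / t^2) * norm (\<pi> x w) ^ 2 \<le> norm w ^ 2"
    using zero_le_power2[of "norm (\<pi> s w)"] by linarith
  then have "norm (\<pi> x w) ^ 2 \<le> (t * norm w) ^ 2" using tp
    by (simp add: divide_simps power_mult_distrib mult.commute)
  then show "norm (\<pi> x w) \<le> t * norm w"
    by (rule power2_le_imp_le) (use tp in simp)
qed simp

end



lemma dense_eq_on:
  fixes F G :: "'h::metric_space \<Rightarrow> 'k::metric_space"
  assumes "continuous_on UNIV F" "continuous_on UNIV G" "closure X = UNIV" "\<And>x. x \<in> X \<Longrightarrow> F x = G x"
  shows "F y = G y"
proof -
  have "closed {x. F x = G x}" by (rule closed_Collect_eq[OF assms(1,2)])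
  moreover have "X \<subseteq> {x. F x = G x}" using assms(4) by auto
  ultimately have "closure X \<subseteq> {x. F x = G x}" by (rule closure_minimal[rotated])
  then show ?thesis using assms(3) by auto
qed

lemma dense_le_on:
  fixes F G :: "'h::metric_space \<Rightarrow> real"
  assumes "continuous_on UNIV F" "continuous_on UNIV G" "closure X = UNIV" "\<And>x. x \<in> X \<Longrightarrow> F x \<le> G x"
  shows "F y \<le> G y"
proof -
  have "closed {x. F x \<le> G x}" by (rule closed_Collect_le[OF assms(1,2)])
  moreover have "X \<subseteq> {x. F x \<le> G x}" using assms(4) by auto
  ultimately have "closure X \<subseteq> {x. F x \<le> G x}" by (rule closure_minimal[rotated])
  then show ?thesis using assms(3) by auto
qed

context
  fixes scC :: "complex \<Rightarrow> 'a::{real_normed_algebra_1,banach} \<Rightarrow> 'a" and st :: "'a \<Rightarrow> 'a"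
    and \<tau> :: "'a \<Rightarrow> complex"
    and hsc :: "complex \<Rightarrow> 'h::banach \<Rightarrow> 'h" and hin :: "'h \<Rightarrow> 'h \<Rightarrow> complex"
    and \<pi> :: "'a \<Rightarrow> 'h \<Rightarrow> 'h" and \<xi> :: 'h
  assumes C: "unital_cstar_algebra scC st" and G: "gns_representation scC st \<tau> hsc hin \<pi> \<xi>"
    and Tr: "tracial_state scC st \<tau>"
begin

lemma H: "complex_hilbert hsc hin" using G unfolding gns_representation_def by blast
lemma P: "star_representation scC st hsc hin \<pi>" using G unfolding gns_representation_def by blast
lemma dense: "closure (range (\<lambda>a. \<pi> a \<xi>)) = UNIV" using G unfolding gns_representation_def by blast
lemma tau: "\<tau> a = hin \<xi> (\<pi> a \<xi>)" using G unfolding gns_representation_def by blast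
lemma trace: "\<tau> (x * y) = \<tau> (y * x)" using Tr unfolding tracial_state_def by blast
lemma tau_one: "\<tau> 1 = 1" using Tr unfolding tracial_state_def by blast

lemma xi_norm: "norm \<xi> = 1"
proof -
  have "norm \<xi> ^ 2 = Re (hin \<xi> (\<pi> 1 \<xi>))" by (simp only: norm_sq_hin[OF H] pi_one[OF C H P])
  also have "\<dots> = 1" using tau_one by (simp add: tau)
  finally show ?thesis using norm_ge_zero[of \<xi>] by (simp add: power2_eq_1_iff)
qed

lemma pi_xi_sq: "norm (\<pi> y \<xi>) ^ 2 = Re (\<tau> (st y * y))"
  by (simp only: pi_norm_sq[OF C H P] tau)

lemma pi_xi_norm: "norm (\<pi> y \<xi>) \<le> norm y"
  using pi_norm[OF C H P, of y \<xi>] by (simp add: xi_norm)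

lemma abs_tau: "cmod (\<tau> y) \<le> norm (\<pi> y \<xi>)"
  using CS[OF H, of \<xi> "\<pi> y \<xi>"] by (simp add: tau xi_norm)

lemma RB: "norm (\<pi> (c * b) \<xi>) \<le> norm b * norm (\<pi> c \<xi>)"
proof -
  have "norm (\<pi> (c * b) \<xi>) ^ 2 = Re (\<tau> (st (c * b) * (c * b)))" by (rule pi_xi_sq)
  also have "\<tau> (st (c * b) * (c * b)) = \<tau> ((st b * st c * c) * b)"
    by (simp add: st_mult[OF C] mult.assoc)
  also have "\<dots> = \<tau> (b * (st b * st c * c))" by (rule trace)
  also have "\<dots> = \<tau> ((b * st b * st c) * c)" by (simp add: mult.assoc)
  also have "\<dots> = \<tau> (c * (b * st b * st c))" by (rule trace)
  also have "\<dots> = \<tau> (st (st b * st c) * (st b * st c))"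
    by (simp add: st_mult[OF C] st_st[OF C] mult.assoc)
  also have "Re \<dots> = norm (\<pi> (st b * st c) \<xi>) ^ 2" by (rule pi_xi_sq[symmetric])
  also have "\<pi> (st b * st c) \<xi> = \<pi> (st b) (\<pi> (st c) \<xi>)" by (rule pi_mult[OF C H P])
  finally have e1: "norm (\<pi> (c * b) \<xi>) ^ 2 = norm (\<pi> (st b) (\<pi> (st c) \<xi>)) ^ 2" .
  have "norm (\<pi> (st c) \<xi>) ^ 2 = Re (\<tau> (st (st c) * st c))" by (rule pi_xi_sq)
  also have "\<tau> (st (st c) * st c) = \<tau> (st c * c)" by (simp add: st_st[OF C] trace)
  also have "Re \<dots> = norm (\<pi> c \<xi>) ^ 2" by (rule pi_xi_sq[symmetric])
  finally have e2: "norm (\<pi> (st c) \<xi>) = norm (\<pi> c \<xi>)" by (simp add: power2_eq_iff_nonneg)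
  have "norm (\<pi> (st b) (\<pi> (st c) \<xi>)) \<le> norm (st b) * norm (\<pi> (st c) \<xi>)" by (rule pi_norm[OF C H P])
  then have "norm (\<pi> (st b) (\<pi> (st c) \<xi>)) \<le> norm b * norm (\<pi> c \<xi>)" by (simp add: norm_st[OF C] e2)
  moreover have "norm (\<pi> (c * b) \<xi>) = norm (\<pi> (st b) (\<pi> (st c) \<xi>))" using e1 by (simp add: power2_eq_iff_nonneg)
  ultimately show ?thesis by simp
qed


lemma pi_cont: "continuous_on UNIV (\<pi> c)"
  by (rule T_cont[OF H pi_bclo[OF C H P]])

lemma wd: "\<pi> a \<xi> = \<pi> a' \<xi> \<Longrightarrow> \<pi> (a * b) \<xi> = \<pi> (a' * b) \<xi>"
proof -
  assume e: "\<pi> a \<xi> = \<pi> a' \<xi>"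
  have "norm (\<pi> (a * b) \<xi> - \<pi> (a' * b) \<xi>) = norm (\<pi> ((a - a') * b) \<xi>)"
    by (simp only: left_diff_distrib pi_diff[OF C H P])
  also have "\<dots> \<le> norm b * norm (\<pi> (a - a') \<xi>)" by (rule RB)
  also have "\<pi> (a - a') \<xi> = 0" by (simp only: pi_diff[OF C H P] e diff_self)
  finally show ?thesis by simp
qed

lemma exR: "\<exists>g. g \<in> commutant hsc (range \<pi>) \<and> (\<forall>a. g (\<pi> a \<xi>) = \<pi> (a * b) \<xi>) \<and>
              (\<forall>u. norm (g u) \<le> norm b * norm u)"
proof -
  define X where "X = range (\<lambda>a. \<pi> a \<xi>)"
  have clX: "closure X = UNIV" unfolding X_def by (rule dense)
  define f0 where "f0 u = \<pi> ((SOME a. \<pi> a \<xi> = u) * b) \<xi>" for u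
  have f0X: "f0 (\<pi> a \<xi>) = \<pi> (a * b) \<xi>" for a
  proof -
    have "\<pi> (SOME a'. \<pi> a' \<xi> = \<pi> a \<xi>) \<xi> = \<pi> a \<xi>" by (rule someI) (rule refl)
    then show ?thesis unfolding f0_def by (rule wd)
  qed
  have lip: "(norm b)-lipschitz_on X f0"
  proof (rule lipschitz_onI)
    fix u v assume "u \<in> X" "v \<in> X"
    then obtain a a' where u: "u = \<pi> a \<xi>" and v: "v = \<pi> a' \<xi>" unfolding X_def by blast
    have "dist (f0 u) (f0 v) = norm (\<pi> ((a - a') * b) \<xi>)"
      by (simp only: u v f0X dist_norm left_diff_distrib pi_diff[OF C H P])
    also have "\<dots> \<le> norm b * norm (\<pi> (a - a') \<xi>)" by (rule RB)
    also have "\<dots> = norm b * dist u v" by (simp only: u v dist_norm pi_diff[OF C H P])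
    finally show "dist (f0 u) (f0 v) \<le> norm b * dist u v" .
  qed simp
  obtain g where gu: "uniformly_continuous_on (closure X) g" and gX: "\<And>x. x \<in> X \<Longrightarrow> f0 x = g x"
    using uniformly_continuous_on_extension_on_closure[OF lipschitz_on_uniformly_continuous[OF lip]] by metis
  have gc: "continuous_on UNIV g" using uniformly_continuous_imp_continuous[OF gu] clX by simp
  have gpi: "g (\<pi> a \<xi>) = \<pi> (a * b) \<xi>" for a using gX[of "\<pi> a \<xi>"] f0X[of a] unfolding X_def by simp
  have add1: "g (u + \<pi> a' \<xi>) = g u + g (\<pi> a' \<xi>)" for u a'
  proof (rule dense_eq_on[where X=X and F="\<lambda>u. g (u + \<pi> a' \<xi>)" and G="\<lambda>u. g u + g (\<pi> a' \<xi>)", OF _ _ clX])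
    show "continuous_on UNIV (\<lambda>u. g (u + \<pi> a' \<xi>))"
      by (rule continuous_on_compose2[OF gc]) (auto intro!: continuous_intros)
    show "continuous_on UNIV (\<lambda>u. g u + g (\<pi> a' \<xi>))" by (intro continuous_intros gc)
    fix x assume "x \<in> X"
    then obtain a where x: "x = \<pi> a \<xi>" unfolding X_def by blast
    show "g (x + \<pi> a' \<xi>) = g x + g (\<pi> a' \<xi>)"
      by (simp only: x pi_add[OF C H P, symmetric] gpi distrib_right)
  qed
  have gadd: "g (u + v) = g u + g v" for u v
  proof (rule dense_eq_on[where X=X and F="\<lambda>v. g (u + v)" and G="\<lambda>v. g u + g v", OF _ _ clX])
    show "continuous_on UNIV (\<lambda>v. g (u + v))"
      by (rule continuous_on_compose2[OF gc]) (auto intro!: continuous_intros)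
    show "continuous_on UNIV (\<lambda>v. g u + g v)" by (intro continuous_intros gc)
    fix x assume "x \<in> X"
    then obtain a where x: "x = \<pi> a \<xi>" unfolding X_def by blast
    show "g (u + x) = g u + g x" unfolding x by (rule add1)
  qed
  have hc: "continuous_on UNIV (hsc c)" for c by (rule T_cont[OF H hsc_bclo[OF H]])
  have gsc: "g (hsc c u) = hsc c (g u)" for c u
  proof (rule dense_eq_on[where X=X and F="\<lambda>u. g (hsc c u)" and G="\<lambda>u. hsc c (g u)", OF _ _ clX])
    show "continuous_on UNIV (\<lambda>u. g (hsc c u))" by (rule continuous_on_compose2[OF gc hc]) auto
    show "continuous_on UNIV (\<lambda>u. hsc c (g u))" by (rule continuous_on_compose2[OF hc gc]) auto
    fix x assume "x \<in> X"
    then obtain a where x: "x = \<pi> a \<xi>" unfolding X_def by blast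
    have sm: "scC c a * b = scC c (a * b)" using C unfolding unital_cstar_algebra_def by metis
    show "g (hsc c x) = hsc c (g x)"
      by (simp only: x pi_sc[OF C H P, symmetric] gpi sm)
  qed
  have gbd: "norm (g u) \<le> norm b * norm u" for u
  proof (rule dense_le_on[where X=X and F="\<lambda>u. norm (g u)" and G="\<lambda>u. norm b * norm u", OF _ _ clX])
    show "continuous_on UNIV (\<lambda>u. norm (g u))" by (intro continuous_intros gc)
    show "continuous_on UNIV (\<lambda>u. norm b * norm u)" by (intro continuous_intros)
    fix x assume "x \<in> X"
    then obtain a where x: "x = \<pi> a \<xi>" unfolding X_def by blast
    show "norm (g x) \<le> norm b * norm x" unfolding x gpi by (rule RB)
  qed
  have gcomm: "g (\<pi> c u) = \<pi> c (g u)" for c u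
  proof (rule dense_eq_on[where X=X and F="\<lambda>u. g (\<pi> c u)" and G="\<lambda>u. \<pi> c (g u)", OF _ _ clX])
    show "continuous_on UNIV (\<lambda>u. g (\<pi> c u))" by (rule continuous_on_compose2[OF gc pi_cont]) auto
    show "continuous_on UNIV (\<lambda>u. \<pi> c (g u))" by (rule continuous_on_compose2[OF pi_cont gc]) auto
    fix x assume "x \<in> X"
    then obtain a where x: "x = \<pi> a \<xi>" unfolding X_def by blast
    show "g (\<pi> c x) = \<pi> c (g x)"
      by (simp only: x pi_mult[OF C H P, symmetric] gpi mult.assoc)
  qed
  have "g \<in> commutant hsc (range \<pi>)"
    unfolding commutant_def bounded_clinear_op_def
    using gadd gsc gbd gcomm by (auto simp: fun_eq_iff)
  then show ?thesis using gpi gbd by blast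
qed
end



theorem proposition5p5:
  fixes scC :: "complex \<Rightarrow> 'a::{real_normed_algebra_1,banach} \<Rightarrow> 'a"
    and st :: "'a \<Rightarrow> 'a"
    and \<tau> :: "'a \<Rightarrow> complex"
    and \<alpha> :: "'a \<Rightarrow> 'a"
    and f :: "nat \<Rightarrow> 'a"
    and hsc :: "complex \<Rightarrow> 'h::banach \<Rightarrow> 'h"
    and hin :: "'h \<Rightarrow> 'h \<Rightarrow> complex"
    and \<pi> :: "'a \<Rightarrow> 'h \<Rightarrow> 'h"
    and \<xi> :: 'h
  assumes "unital_cstar_algebra scC st"
    and "simple_algebra scC"
    and "projectionless st"
    and "unique_tracial_state scC st \<tau>"
    and "star_automorphism scC st \<alpha>"
    and "\<forall>n. positive_el scC st (f n) \<and> norm (f n) \<le> 1"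
    and "\<forall>a. (\<lambda>n. norm (f n * a - a * f n)) \<longlonglongrightarrow> 0"
    and "(\<lambda>n. norm (\<alpha> (f n) * f n)) \<longlonglongrightarrow> 0"
    and "(\<lambda>n. \<tau> (1 - (f n + \<alpha> (f n)))) \<longlonglongrightarrow> 0"
    and "gns_representation scC st \<tau> hsc hin \<pi> \<xi>"
  shows "\<alpha> \<notin> WInn scC st hsc hin \<pi>"
proof
  note C = assms(1) and G = assms(10)
  have Tr: "tracial_state scC st \<tau>" using assms(4) unfolding unique_tracial_state_def by blast
  note H = H[OF C G Tr] and P = P[OF C G Tr]
  have fs: "st (f n) = f n" for n using assms(6) unfolding positive_el_def by blast
  have fn1: "norm (f n) \<le> 1" for n using assms(6) by blast
  have ast: "\<alpha> (st x) = st (\<alpha> x)" for x using assms(5) unfolding star_automorphism_def by blast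
  assume "\<alpha> \<in> WInn scC st hsc hin \<pi>"
  then obtain V where Vu: "unitary_op hsc hin V"
    and Vc: "V \<in> commutant hsc (commutant hsc (range \<pi>))"
    and Va: "\<And>a. \<pi> (\<alpha> a) = V \<circ> \<pi> a \<circ> inv V"
    unfolding WInn_def by blast
  have Vb: "bounded_clinear_op hsc V" and Vs: "surj V" and Vi: "\<And>x y. hin (V x) (V y) = hin x y"
    using Vu unfolding unitary_op_def by blast+
  have Vn: "norm (V x) = norm x" for x
  proof -
    have "norm (V x) ^ 2 = norm x ^ 2" by (simp only: norm_sq_hin[OF H] Vi)
    then show ?thesis by (simp add: power2_eq_iff_nonneg)
  qed
  have Vinj: "inj V"
  proof (rule injI)
    fix x y assume "V x = V y"
    then have "V (x - y) = 0" by (simp add: T_diff[OF H Vb])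
    then have "norm (x - y) = 0" using Vn[of "x - y"] by simp
    then show "x = y" by simp
  qed
  define W where "W = inv V"
  have VW: "V (W y) = y" for y unfolding W_def using Vs by (simp add: surj_f_inv_f)
  have WV: "W (V x) = x" for x unfolding W_def using Vinj by (simp add: inv_f_f)
  have "\<forall>b. \<exists>g. g \<in> commutant hsc (range \<pi>) \<and> (\<forall>a. g (\<pi> a \<xi>) = \<pi> (a * b) \<xi>) \<and>
              (\<forall>u. norm (g u) \<le> norm b * norm u)"
    using exR[OF C G Tr] by blast
  then obtain R where R: "\<And>b. R b \<in> commutant hsc (range \<pi>)"
    and Rpi: "\<And>b a. R b (\<pi> a \<xi>) = \<pi> (a * b) \<xi>"
    and Rn: "\<And>b u. norm (R b u) \<le> norm b * norm u"
    by metis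
  have Rb: "bounded_clinear_op hsc (R b)" for b using R[of b] unfolding commutant_def by blast
  have VR: "V (R b y) = R b (V y)" for b y
  proof -
    have "V \<circ> R b = R b \<circ> V" using Vc R[of b] unfolding commutant_def by blast
    then show ?thesis by (metis comp_apply)
  qed
  have Rxi: "R b \<xi> = \<pi> b \<xi>" for b
    using Rpi[of b 1] by (simp add: pi_one[OF C H P])
  define \<eta> where "\<eta> = W \<xi>"
  define u where "u n = \<pi> (f n) \<xi>" for n
  define v where "v n = \<pi> (\<alpha> (f n)) \<xi>" for n
  define d where "d n = norm (\<pi> (f n) \<eta> - R (f n) \<eta>)" for n
  define e where "e n = norm (\<alpha> (f n) * f n)" for n
  have v_eq: "v n = V (\<pi> (f n) \<eta>)" for n unfolding v_def \<eta>_def W_def by (simp add: Va)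
  have u_eq: "u n = V (R (f n) \<eta>)" for n
    unfolding u_def by (simp add: VR \<eta>_def VW Rxi)
  have duv: "norm (u n - v n) = d n" for n
  proof -
    have "u n - v n = V (R (f n) \<eta> - \<pi> (f n) \<eta>)" by (simp add: u_eq v_eq T_diff[OF H Vb])
    then show ?thesis by (simp add: Vn d_def norm_minus_commute)
  qed
  have d0: "d \<longlonglongrightarrow> 0"
  proof (rule LIMSEQ_I)
    fix r :: real assume r: "r > 0"
    have "\<eta> \<in> closure (range (\<lambda>a. \<pi> a \<xi>))" using dense[OF C G Tr] by simp
    then obtain y where "y \<in> range (\<lambda>a. \<pi> a \<xi>)" and dy: "dist y \<eta> < r / 3"
      using r unfolding closure_approachable by (metis divide_pos_pos zero_less_numeral)
    then obtain a where ya: "y = \<pi> a \<xi>" by blast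
    have ay: "norm (\<eta> - \<pi> a \<xi>) < r / 3" "norm (\<pi> a \<xi> - \<eta>) < r / 3"
      using dy ya by (simp_all add: dist_norm norm_minus_commute)
    obtain N where N: "\<And>n. n \<ge> N \<Longrightarrow> norm (norm (f n * a - a * f n) - 0) < r / 3"
      using LIMSEQ_D[OF spec[OF assms(7), of a], of "r / 3"] r by auto
    show "\<exists>N. \<forall>n\<ge>N. norm (d n - 0) < r"
    proof (intro exI allI impI)
      fix n assume n: "n \<ge> N"
      have split: "\<pi> (f n) \<eta> - R (f n) \<eta> =
        \<pi> (f n) (\<eta> - \<pi> a \<xi>) + \<pi> (f n * a - a * f n) \<xi> + R (f n) (\<pi> a \<xi> - \<eta>)"
        by (simp add: T_diff[OF H pi_bclo[OF C H P]] T_diff[OF H Rb] pi_diff[OF C H P]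
                      pi_mult[OF C H P] Rpi)
      have "d n \<le> norm (\<pi> (f n) (\<eta> - \<pi> a \<xi>)) + norm (\<pi> (f n * a - a * f n) \<xi>)
                  + norm (R (f n) (\<pi> a \<xi> - \<eta>))"
        unfolding d_def split by (rule order_trans[OF norm_triangle_ineq add_right_mono[OF norm_triangle_ineq]])
      also have "\<dots> \<le> 1 * norm (\<eta> - \<pi> a \<xi>) + norm (f n * a - a * f n) + 1 * norm (\<pi> a \<xi> - \<eta>)"
      proof (intro add_mono)
        show "norm (\<pi> (f n) (\<eta> - \<pi> a \<xi>)) \<le> 1 * norm (\<eta> - \<pi> a \<xi>)"
          using pi_norm[OF C H P, of "f n" "\<eta> - \<pi> a \<xi>"] fn1[of n]
          by (meson mult_right_mono norm_ge_zero order_trans)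
        show "norm (\<pi> (f n * a - a * f n) \<xi>) \<le> norm (f n * a - a * f n)"
          by (rule pi_xi_norm[OF C G Tr])
        show "norm (R (f n) (\<pi> a \<xi> - \<eta>)) \<le> 1 * norm (\<pi> a \<xi> - \<eta>)"
          using Rn[of "f n" "\<pi> a \<xi> - \<eta>"] fn1[of n]
          by (meson mult_right_mono norm_ge_zero order_trans)
      qed
      also have "\<dots> < r" using ay N[OF n] by simp
      finally show "norm (d n - 0) < r" using d_def by simp
    qed
  qed
  have e0: "e \<longlonglongrightarrow> 0" unfolding e_def by (rule assms(8))
  have un1: "norm (u n) \<le> 1" for n unfolding u_def using pi_xi_norm[OF C G Tr, of "f n"] fn1[of n] by simp
  have tau_eq: "\<tau> x = hin \<xi> (\<pi> x \<xi>)" for x by (rule tau[OF C G Tr])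
  have usq: "norm (u n) ^ 2 \<le> d n + e n" for n
  proof -
    have hv: "hin (v n) (u n) = \<tau> (\<alpha> (f n) * f n)"
    proof -
      have "hin (v n) (u n) = hin (\<pi> (st (\<alpha> (f n))) \<xi>) (\<pi> (f n) \<xi>)"
        unfolding v_def u_def by (simp add: ast[symmetric] fs)
      also have "\<dots> = hin \<xi> (\<pi> (\<alpha> (f n)) (\<pi> (f n) \<xi>))" by (rule pi_adj[OF C H P])
      also have "\<dots> = \<tau> (\<alpha> (f n) * f n)" by (simp add: tau_eq pi_mult[OF C H P])
      finally show ?thesis .
    qed
    have "norm (u n) ^ 2 = Re (hin (u n - v n) (u n) + hin (v n) (u n))"
      by (simp add: norm_sq_hin[OF H] hin_diff1[OF H])
    also have "\<dots> \<le> cmod (hin (u n - v n) (u n)) + cmod (hin (v n) (u n))"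
      by (simp only: plus_complex.sel) (intro add_mono complex_Re_le_cmod)
    also have "cmod (hin (u n - v n) (u n)) \<le> d n"
      using CS[OF H, of "u n - v n" "u n"] duv[of n] un1[of n]
      by (metis mult_left_le norm_ge_zero order_trans)
    also have "cmod (hin (v n) (u n)) \<le> e n"
      unfolding hv e_def
      using abs_tau[OF C G Tr, of "\<alpha> (f n) * f n"] pi_xi_norm[OF C G Tr, of "\<alpha> (f n) * f n"] by simp
    finally show ?thesis by simp
  qed
  have un: "norm (u n) \<le> sqrt (d n + e n)" for n
    using usq[of n] real_le_rsqrt by blast
  define g where "g n = 2 * sqrt (d n + e n) + d n" for n
  have g0: "g \<longlonglongrightarrow> 0"
  proof -
    have "(\<lambda>n. 2 * sqrt (d n + e n) + d n) \<longlonglongrightarrow> 2 * sqrt (0 + 0) + 0"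
      by (intro tendsto_intros d0 e0)
    then show ?thesis unfolding g_def by simp
  qed
  have tau_add: "\<tau> (x + y) = \<tau> x + \<tau> y" for x y by (simp add: tau_eq pi_add[OF C H P] hin_add2[OF H])
  have tau_diff: "\<tau> (x - y) = \<tau> x - \<tau> y" for x y by (simp add: tau_eq pi_diff[OF C H P] hin_diff2[OF H])
  have bnd: "norm (\<tau> (1 - (f n + \<alpha> (f n))) - 1) \<le> g n" for n
  proof -
    have "\<tau> (1 - (f n + \<alpha> (f n))) - 1 = - (\<tau> (f n) + \<tau> (\<alpha> (f n)))"
      using tau_one[OF C G Tr] by (simp add: tau_diff tau_add)
    then have "norm (\<tau> (1 - (f n + \<alpha> (f n))) - 1) = cmod (\<tau> (f n) + \<tau> (\<alpha> (f n)))"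
      by (simp only: norm_minus_cancel)
    also have "\<dots> \<le> cmod (\<tau> (f n)) + cmod (\<tau> (\<alpha> (f n)))" by (rule norm_triangle_ineq)
    also have "\<dots> \<le> norm (u n) + norm (v n)"
      unfolding u_def v_def by (intro add_mono abs_tau[OF C G Tr])
    also have "norm (v n) \<le> norm (u n) + d n"
      using norm_triangle_ineq4[of "u n" "v n"] duv[of n] norm_minus_commute
      by (metis add.commute diff_add_cancel norm_triangle_ineq)
    also have "norm (u n) + (norm (u n) + d n) \<le> g n" using un[of n] unfolding g_def by simp
    finally show ?thesis by simp
  qed
  have "(\<lambda>n. \<tau> (1 - (f n + \<alpha> (f n))) - 1) \<longlonglongrightarrow> 0"
    by (rule Lim_null_comparison[OF _ g0]) (use bnd in simp)
  moreover have "(\<lambda>n. \<tau> (1 - (f n + \<alpha> (f n))) - 1) \<longlonglongrightarrow> 0 - 1"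
    by (intro tendsto_intros assms(9))
  ultimately have "(0::complex) = 0 - 1" by (rule LIMSEQ_unique)
  then show False by simp
qed

end
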